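(* Let $\kappa$ be a regular uncountable cardinal and $I$ an ideal on $\kappa$ which is a p-point. Then $I$ is prepleasant if and only if $I$ is pleasant.
   Context: An ideal on $\kappa$ is a family of subsets of $\kappa$ closed under subsets and finite unions, which is $<\kappa$-complete and contains all singletons; $I_\kappa=\{X\subseteq\kappa:|X|<\kappa\}$. $I^*=\{\kappa\setminus X: X\in I\}$. For an ideal $J$, a function $f$ with domain $\subseteq\kappa$ is $J$-small if $f^{-1}(\{\xi\})\in J$ for every $\xi<\kappa$. $I$ is a p-point if for every $I$-small $f:\kappa\to\kappa$ there is $X\in I^*$ with $f\restriction X$ being $I_\kappa$-small. For $A\subseteq\kappa$ and $X_\alpha\subseteq\kappa$, $\bigtriangledown_{\alpha\in A}X_\alpha=\{\xi<\kappa:\exists\alpha<\xi\,(\alpha\in A\wedge \xi\in X_\alpha)\}$. $I$ is pleasant if whenever $A\in I$ and $X_\alpha\in I$ for all $\alpha$, then $\bigtriangledown_{\alpha\in A}X_\alpha\in I$. $I$ is prepleasant if for every $Q\in I$ and every sequence $\langle B_\alpha\rangle_{\alpha<\kappa}$ of bounded subsets of $\kappa$, $\bigtriangledown_{\alpha\in Q}B_\alpha\in I$. *)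

theory Defs
  imports Main
begin

unbundle cardinal_syntax

text \<open>The cardinal kappa is modelled as a well-ordered type 'k whose order is
  the ordinal kappa (i.e. 'k is order-isomorphic to the set of ordinals below kappa).\<close>

definition kord :: "('k::wellorder) rel" where
  "kord = {(x, y). x \<le> y}"

definition regular_uncountable_cardinal_type :: "('k::wellorder) itself \<Rightarrow> bool" where
  "regular_uncountable_cardinal_type _ \<longleftrightarrow>
     Card_order (kord :: 'k rel) \<and> regularCard (kord :: 'k rel) \<and>
     \<not> |UNIV :: 'k set| \<le>o |UNIV :: nat set|"

definition Ikappa :: "('k::wellorder) set set" where
  "Ikappa = {X. |X| <o |UNIV :: 'k set|}"

definition is_ideal :: "('k::wellorder) set set \<Rightarrow> bool" where
  "is_ideal I \<longleftrightarrow>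
     (\<forall>X Y. X \<in> I \<and> Y \<subseteq> X \<longrightarrow> Y \<in> I) \<and>
     (\<forall>X Y. X \<in> I \<and> Y \<in> I \<longrightarrow> X \<union> Y \<in> I) \<and>
     (\<forall>F. F \<subseteq> I \<and> |F| <o |UNIV :: 'k set| \<longrightarrow> \<Union>F \<in> I) \<and>
     (\<forall>x. {x} \<in> I)"

definition dual_filter :: "('k::wellorder) set set \<Rightarrow> 'k set set" where
  "dual_filter I = {- X | X. X \<in> I}"

definition small :: "('k::wellorder) set set \<Rightarrow> ('k \<Rightarrow> 'k) \<Rightarrow> 'k set \<Rightarrow> bool" where
  "small J f D \<longleftrightarrow> (\<forall>\<xi>. {x \<in> D. f x = \<xi>} \<in> J)"

definition p_point :: "('k::wellorder) set set \<Rightarrow> bool" where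
  "p_point I \<longleftrightarrow>
     (\<forall>f :: 'k \<Rightarrow> 'k. small I f UNIV \<longrightarrow>
        (\<exists>X \<in> dual_filter I. small Ikappa f X))"

definition diag_union :: "('k::wellorder) set \<Rightarrow> ('k \<Rightarrow> 'k set) \<Rightarrow> 'k set" where
  "diag_union A X = {\<xi>. \<exists>\<alpha>. \<alpha> < \<xi> \<and> \<alpha> \<in> A \<and> \<xi> \<in> X \<alpha>}"

definition pleasant :: "('k::wellorder) set set \<Rightarrow> bool" where
  "pleasant I \<longleftrightarrow>
     (\<forall>A X. A \<in> I \<and> (\<forall>\<alpha>. X \<alpha> \<in> I) \<longrightarrow> diag_union A X \<in> I)"

definition bounded_set :: "('k::wellorder) set \<Rightarrow> bool" where
  "bounded_set B \<longleftrightarrow> (\<exists>\<beta>. B \<subseteq> {..<\<beta>})"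

definition prepleasant :: "('k::wellorder) set set \<Rightarrow> bool" where
  "prepleasant I \<longleftrightarrow>
     (\<forall>Q B. Q \<in> I \<and> (\<forall>\<alpha>. bounded_set (B \<alpha>)) \<longrightarrow> diag_union Q B \<in> I)"

end

theory Submission imports Defs begin

lemma field_kord: "Field (kord::'k::wellorder rel) = UNIV"
  by (auto simp: kord_def Field_def)

lemma underS_kord: "underS (kord::'k::wellorder rel) a = {..<a}"
  by (auto simp: underS_def kord_def)

lemma inf_univ:
  assumes "regular_uncountable_cardinal_type TYPE('k::wellorder)"
  shows "infinite (UNIV::'k set)"
proof
  assume "finite (UNIV::'k set)"
  then obtain f :: "'k \<Rightarrow> nat" where "inj_on f UNIV"
    using finite_imp_inj_to_nat_seg by blast
  then have "|UNIV::'k set| \<le>o |UNIV::nat set|" using card_of_ordLeq by blast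
  then show False using assms unfolding regular_uncountable_cardinal_type_def by blast
qed

lemma small_lessThan:
  assumes "regular_uncountable_cardinal_type TYPE('k::wellorder)"
  shows "|{..<a::'k}| <o |UNIV::'k set|"
proof -
  have co: "Card_order (kord::'k rel)" using assms unfolding regular_uncountable_cardinal_type_def by blast
  have "|underS kord a| <o (kord::'k rel)" using card_of_underS[OF co] field_kord by blast
  moreover have "|UNIV::'k set| =o (kord::'k rel)" using card_of_Field_ordIso[OF co] field_kord by metis
  ultimately show ?thesis using underS_kord ordIso_symmetric ordLess_ordIso_trans by metis
qed

lemma finite_small:
  assumes "regular_uncountable_cardinal_type TYPE('k::wellorder)" "finite (S::'k set)"
  shows "|S| <o |UNIV::'k set|"
proof -
  have "\<not> |UNIV::'k set| \<le>o |S|" using card_of_ordLeq_finite assms inf_univ by blast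
  then show ?thesis using not_ordLeq_iff_ordLess card_of_Well_order by blast
qed

lemma no_max:
  assumes "regular_uncountable_cardinal_type TYPE('k::wellorder)"
  shows "\<exists>b. (a::'k) < b"
proof (rule ccontr)
  assume "\<not> ?thesis"
  then have "UNIV = {a} \<union> {..<a}" using le_less by (auto simp: not_less)
  moreover have "|{a} \<union> {..<a}| <o |UNIV::'k set|"
    using card_of_Un_ordLess_infinite[OF inf_univ[OF assms] finite_small[OF assms] small_lessThan[OF assms], of "{a}"] by simp
  ultimately show False using ordLess_irreflexive by metis
qed

lemma small_bounded:
  assumes "regular_uncountable_cardinal_type TYPE('k::wellorder)" "|S::'k set| <o |UNIV::'k set|"
  shows "bounded_set S"
proof -
  have co: "Card_order (kord::'k rel)" and rc: "regularCard (kord::'k rel)"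
    using assms unfolding regular_uncountable_cardinal_type_def by blast+
  have "|UNIV::'k set| =o (kord::'k rel)" using card_of_Field_ordIso[OF co] field_kord by metis
  have "\<not> |S| =o (kord::'k rel)"
    by (meson \<open>|UNIV| =o kord\<close> assms(2) ordIso_symmetric ordIso_transitive ordLess_irreflexive ordLess_ordIso_trans)
  then have "\<not> cofinal S kord" using rc unfolding regularCard_def field_kord by blast
  then obtain c where c: "\<forall>b\<in>S. b \<le> c" unfolding cofinal_def field_kord kord_def
    by (metis (mono_tags, lifting) case_prodI le_cases mem_Collect_eq order.order_iff_strict)
  obtain d where "c < d" using no_max[OF assms(1)] by blast
  then show ?thesis unfolding bounded_set_def using c
    by (metis lessThan_iff order_le_less_trans subsetI)
qed
lemma small_in_I:
  assumes "is_ideal I" "|S::'k::wellorder set| <o |UNIV::'k set|"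
  shows "S \<in> I"
proof -
  let ?F = "(\<lambda>x. {x}) ` S"
  have "?F \<subseteq> I" using assms(1) unfolding is_ideal_def by blast
  moreover have "|?F| <o |UNIV::'k set|" using card_of_image assms(2) ordLeq_ordLess_trans by blast
  moreover have "\<Union>?F = S" by blast
  ultimately show ?thesis using assms(1) unfolding is_ideal_def by metis
qed

theorem theorem3p2:
  fixes I :: "('k::wellorder) set set"
  assumes "regular_uncountable_cardinal_type TYPE('k)"
    and "is_ideal I"
    and "p_point I"
  shows "prepleasant I \<longleftrightarrow> pleasant I"
proof
  assume pl: "pleasant I"
  show "prepleasant I" unfolding prepleasant_def
  proof (intro allI impI)
    fix Q and B :: "'k \<Rightarrow> 'k set"
    assume h: "Q \<in> I \<and> (\<forall>\<alpha>. bounded_set (B \<alpha>))"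
    have "B \<alpha> \<in> I" for \<alpha>
    proof -
      obtain \<beta> where "B \<alpha> \<subseteq> {..<\<beta>}" using h unfolding bounded_set_def by blast
      moreover have "{..<\<beta>} \<in> I" using small_in_I[OF assms(2) small_lessThan[OF assms(1)]] .
      ultimately show ?thesis using assms(2) unfolding is_ideal_def by blast
    qed
    then show "diag_union Q B \<in> I" using pl h unfolding pleasant_def by blast
  qed
next
  assume pp: "prepleasant I"
  show "pleasant I" unfolding pleasant_def
  proof (intro allI impI)
    fix A and X :: "'k \<Rightarrow> 'k set"
    assume h: "A \<in> I \<and> (\<forall>\<alpha>. X \<alpha> \<in> I)"
    have sub: "\<And>U V. U \<in> I \<Longrightarrow> V \<subseteq> U \<Longrightarrow> V \<in> I"
      and un: "\<And>U V. U \<in> I \<Longrightarrow> V \<in> I \<Longrightarrow> U \<union> V \<in> I"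
      and sg: "\<And>x. {x} \<in> I"
      using assms(2) unfolding is_ideal_def by blast+
    define D where "D = diag_union A X"
    define f where "f = (\<lambda>\<xi>. if \<xi> \<in> D then (LEAST \<alpha>. \<alpha> < \<xi> \<and> \<alpha> \<in> A \<and> \<xi> \<in> X \<alpha>) else \<xi>)"
    have fD: "f \<xi> < \<xi> \<and> f \<xi> \<in> A \<and> \<xi> \<in> X (f \<xi>)" if xD: "\<xi> \<in> D" for \<xi>
    proof -
      obtain \<alpha> where "\<alpha> < \<xi> \<and> \<alpha> \<in> A \<and> \<xi> \<in> X \<alpha>" using xD unfolding D_def diag_union_def by blast
      then have "(\<lambda>\<alpha>. \<alpha> < \<xi> \<and> \<alpha> \<in> A \<and> \<xi> \<in> X \<alpha>) (LEAST \<alpha>. \<alpha> < \<xi> \<and> \<alpha> \<in> A \<and> \<xi> \<in> X \<alpha>)"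
        by (rule LeastI)
      then show ?thesis unfolding f_def using xD by simp
    qed
    have "small I f UNIV" unfolding small_def
    proof
      fix \<xi>
      have "{x \<in> UNIV. f x = \<xi>} \<subseteq> X \<xi> \<union> {\<xi>}" using fD unfolding f_def by force
      moreover have "X \<xi> \<union> {\<xi>} \<in> I" using h un sg by blast
      ultimately show "{x \<in> UNIV. f x = \<xi>} \<in> I" by (metis sub)
    qed
    then obtain Y where Y: "Y \<in> dual_filter I" "small Ikappa f Y" using assms(3) unfolding p_point_def by blast
    obtain Z where Z: "Z \<in> I" "Y = - Z" using Y(1) unfolding dual_filter_def by blast
    define B where "B = (\<lambda>\<alpha>. {\<xi> \<in> Y. f \<xi> = \<alpha>})"
    have "bounded_set (B \<alpha>)" for \<alpha>
      using small_bounded[OF assms(1)] Y(2) unfolding small_def Ikappa_def B_def by blast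
    then have "diag_union A B \<in> I" using pp h unfolding prepleasant_def by blast
    moreover have "D \<inter> Y \<subseteq> diag_union A B" unfolding diag_union_def B_def using fD by blast
    ultimately have "D \<inter> Y \<in> I" by (metis sub)
    then have "(D \<inter> Y) \<union> Z \<in> I" using Z un by blast
    moreover have "D \<subseteq> (D \<inter> Y) \<union> Z" using Z by blast
    ultimately show "diag_union A X \<in> I" unfolding D_def by (metis sub)
  qed
qed
end
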